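(* Let $\Sigma$ be an alphabet with $n$ letters, let $\ell\notin\Sigma$, let $P=p_1p_2\cdots p_n$ be a permutation of $\Sigma$, and let $\pi:\ \pi_1<\pi_2<\cdots<\pi_{n+1}$ be a total ordering of $\Sigma\cup\{\ell\}$ with $\pi_1\neq \ell$. Define a sequence $\beta_1,\beta_2,\dots$ of elements of $\Sigma\cup\{\ell\}$ by $\beta_1=\pi_1$ and, whenever $\beta_j=p_x$ for some $x$ with $p_x<_\pi \min_\pi\{p_n,\ell\}$, by $$\beta_{j+1}=\min_\pi\{p_{x+1},\dots,p_n,\ell\};$$ the sequence stops at the first index $w$ with $\beta_w=\min_\pi\{p_n,\ell\}$. For $1\le j\le w$ let $S_j$ denote the lineage taxon string of the taxon $\beta_j$ in the line tree $T(P)$ under $\pi$. Then every $S_j$ is nonempty, and $$P = S_1[1,|S_1|-1]\,\beta_1\,S_2[1,|S_2|-1]\,\beta_2\cdots S_{w-1}[1,|S_{w-1}|-1]\,\beta_{w-1}\,S'_w,$$ where $$S'_w=\begin{cases} S_w & \text{if } \beta_w=\ell,\\ S_w[1,|S_w|-1]\,\beta_w & \text{if } \beta_w\neq\ell,\end{cases}$$ $S[1,|S|-1]$ denotes the string obtained from a nonempty string $S$ by deleting its last letter, and juxtaposition denotes concatenation.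
   Context: Line tree $T(P)$: for a permutation $P=p_1\cdots p_n$ of $\Sigma$ and a letter $\ell\notin\Sigma$, $T(P)$ is the rooted tree with leaf set $\Sigma\cup\{\ell\}$, internal nodes $r,v_1,\dots,v_n$, and directed edges $(r,v_1)$, $(v_i,v_{i+1})$ and $(v_i,p_i)$ for $1\le i\le n-1$, and $(v_n,p_n)$, $(v_n,\ell)$. The root $r$ has outdegree 1. Lineage taxon string (LTS): let $T$ be a rooted binary tree whose root has outdegree 1 and whose leaves are labeled bijectively by a taxon set $X$, and let $\pi$ be a total ordering of $X$. For a node $u$, $\min_\pi(u)$ is the $\pi$-smallest taxon among the leaves below or equal to $u$. Label the root with the $\pi$-smallest taxon of $X$, and label each non-root internal node $u$ (which has two children $u',u''$) with the $\pi$-larger of $\min_\pi(u')$ and $\min_\pi(u'')$. Each taxon $f$ is then the label of exactly one internal node $w_f$, and the leaf $f$ lies below $w_f$. The LTS of $f$ in $T$ under $\pi$ is the sequence of labels of the nodes strictly between $w_f$ and the leaf $f$ on the directed path from $w_f$ to $f$, listed in order from $w_f$ towards $f$ (it may be empty). For example, for $P=edabc$ and the ordering $a<b<c<d<e<\ell$, the LTSs of $a,b,c$ in $T(P)$ are $edb$, $c$, $\ell$, and those of $d,e,\ell$ are empty. *)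

theory Defs
  imports Main
begin

text \<open>A rooted binary tree whose root has outdegree 1 is represented by the binary
tree hanging below the root: the root r is implicit, and its unique child is the
top of the given btree. Nodes of the btree are addressed by positions
(paths from the top, False = left child, True = right child).\<close>

datatype 'a btree = Lf 'a | Nd "'a btree" "'a btree"

fun sub :: "'a btree \<Rightarrow> bool list \<Rightarrow> 'a btree" where
  "sub t [] = t"
| "sub (Nd l r) (b # p) = sub (if b then r else l) p"
| "sub (Lf a) (b # p) = Lf a"

fun pos :: "'a btree \<Rightarrow> bool list set" where
  "pos (Lf a) = {[]}"
| "pos (Nd l r) = insert [] (Cons False ` pos l \<union> Cons True ` pos r)"

fun leaves :: "'a btree \<Rightarrow> 'a set" where
  "leaves (Lf a) = {a}"
| "leaves (Nd l r) = leaves l \<union> leaves r"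

datatype node = Root | Inner "bool list"

definition is_internal :: "'a btree \<Rightarrow> node \<Rightarrow> bool" where
  "is_internal t v \<longleftrightarrow> v = Root \<or>
     (\<exists>p l r. v = Inner p \<and> p \<in> pos t \<and> sub t p = Nd l r)"

text \<open>A total ordering \<pi> of a finite set is given as a distinct list
pi = [\<pi>_1, ..., \<pi>_N]; x <_\<pi> y iff x occurs before y.\<close>

definition prec :: "'a list \<Rightarrow> 'a \<Rightarrow> 'a \<Rightarrow> bool" where
  "prec pi x y \<longleftrightarrow> (\<exists>i j. i < j \<and> j < length pi \<and> pi ! i = x \<and> pi ! j = y)"

definition pmin :: "'a list \<Rightarrow> 'a set \<Rightarrow> 'a" where
  "pmin pi S = (THE x. x \<in> S \<and> (\<forall>y\<in>S. y \<noteq> x \<longrightarrow> prec pi x y))"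

definition pmax2 :: "'a list \<Rightarrow> 'a \<Rightarrow> 'a \<Rightarrow> 'a" where
  "pmax2 pi a b = (if prec pi a b then b else a)"

fun label :: "'a list \<Rightarrow> 'a btree \<Rightarrow> node \<Rightarrow> 'a" where
  "label pi t Root = pmin pi (leaves t)"
| "label pi t (Inner p) =
     (case sub t p of
        Nd l r \<Rightarrow> pmax2 pi (pmin pi (leaves l)) (pmin pi (leaves r))
      | Lf a \<Rightarrow> a)"

definition leafpos :: "'a btree \<Rightarrow> 'a \<Rightarrow> bool list" where
  "leafpos t f = (THE p. p \<in> pos t \<and> sub t p = Lf f)"

definition wnode :: "'a list \<Rightarrow> 'a btree \<Rightarrow> 'a \<Rightarrow> node" where
  "wnode pi t f = (THE v. is_internal t v \<and> label pi t v = f)"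

text \<open>The LTS of f: labels of the nodes strictly between w_f and the leaf f on the
directed path from w_f to f, in order from w_f towards f. The nodes of the btree on
the path from the top to the leaf at position q are those at positions take k q,
k = 0..length q; the root lies above all of them.\<close>
definition lts :: "'a list \<Rightarrow> 'a btree \<Rightarrow> 'a \<Rightarrow> 'a list" where
  "lts pi t f =
     (let q = leafpos t f in
      case wnode pi t f of
        Root \<Rightarrow> map (\<lambda>k. label pi t (Inner (take k q))) [0..<length q]
      | Inner p \<Rightarrow> map (\<lambda>k. label pi t (Inner (take k q))) [Suc (length p)..<length q])"

text \<open>T(P): r -> v_1, v_i -> v_{i+1}, v_i -> p_i, v_n -> p_n, v_n -> l.
Below the root this is Nd (Lf p_1) (Nd (Lf p_2) ... (Nd (Lf p_n) (Lf l))).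
(Only meaningful for nonempty P.)\<close>
fun line_tree :: "'a list \<Rightarrow> 'a \<Rightarrow> 'a btree" where
  "line_tree [] l = Lf l"
| "line_tree (p # ps) l = Nd (Lf p) (line_tree ps l)"

text \<open>bs = [\<beta>_1, ..., \<beta>_w] (0-indexed). P ! (x - 1) = p_x and
set (drop x P) = {p_{x+1}, ..., p_n}.\<close>
definition beta_seq :: "'a list \<Rightarrow> 'a list \<Rightarrow> 'a \<Rightarrow> 'a list \<Rightarrow> bool" where
  "beta_seq pi P l bs \<longleftrightarrow>
     (let m = pmin pi {last P, l} in
      bs \<noteq> [] \<and> hd bs = hd pi \<and> last bs = m \<and>
      (\<forall>j < length bs - 1. bs ! j \<noteq> m \<and>
         (\<exists>x. 1 \<le> x \<and> x \<le> length P \<and> bs ! j = P ! (x - 1) \<and> prec pi (bs ! j) m \<and>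
              bs ! (j + 1) = pmin pi (set (drop x P) \<union> {l}))))"

end

theory Submission
  imports Defs
begin



definition rk :: "'a list \<Rightarrow> 'a \<Rightarrow> nat" where
  "rk pi x = (THE i. i < length pi \<and> pi ! i = x)"

lemma rk: assumes "distinct pi" "x \<in> set pi" shows "rk pi x < length pi \<and> pi ! rk pi x = x"
proof -
  obtain i where i: "i < length pi" "pi ! i = x" using assms(2) by (auto simp: in_set_conv_nth)
  have "rk pi x = i" unfolding rk_def
    by (rule the_equality) (use i assms(1) nth_eq_iff_index_eq in auto)
  thus ?thesis using i by simp
qed

lemma rk_inj: assumes "distinct pi" "x \<in> set pi" "y \<in> set pi" "rk pi x = rk pi y" shows "x = y"
  using rk[OF assms(1,2)] rk[OF assms(1,3)] assms(4) by metis

lemma prec_rk: assumes "distinct pi"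
  shows "prec pi x y \<longleftrightarrow> x \<in> set pi \<and> y \<in> set pi \<and> rk pi x < rk pi y"
proof
  assume "prec pi x y"
  then obtain i j where ij: "i < j" "j < length pi" "pi ! i = x" "pi ! j = y" unfolding prec_def by auto
  have ilen: "i < length pi" using ij by simp
  have "rk pi x = i" unfolding rk_def
    by (rule the_equality) (use ij ilen in \<open>auto simp: nth_eq_iff_index_eq[OF assms(1)]\<close>)
  moreover have "rk pi y = j" unfolding rk_def
    by (rule the_equality) (use ij in \<open>auto simp: nth_eq_iff_index_eq[OF assms(1)]\<close>)
  moreover have "x \<in> set pi" using nth_mem[OF ilen] ij(3) by simp
  moreover have "y \<in> set pi" using nth_mem[OF ij(2)] ij(4) by simp
  ultimately show "x \<in> set pi \<and> y \<in> set pi \<and> rk pi x < rk pi y" using ij by auto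
next
  assume "x \<in> set pi \<and> y \<in> set pi \<and> rk pi x < rk pi y"
  thus "prec pi x y" unfolding prec_def using rk[OF assms] by blast
qed

lemma pmin: assumes "distinct pi" "finite S" "S \<noteq> {}" "S \<subseteq> set pi"
  shows "pmin pi S \<in> S \<and> (\<forall>y\<in>S. rk pi (pmin pi S) \<le> rk pi y)"
proof -
  have "Min (rk pi ` S) \<in> rk pi ` S" using assms by auto
  then obtain x where x: "x \<in> S" "rk pi x = Min (rk pi ` S)" by auto
  have le: "\<forall>y\<in>S. rk pi x \<le> rk pi y" using x assms(2) by auto
  have P: "\<forall>y\<in>S. y \<noteq> x \<longrightarrow> prec pi x y"
  proof (intro ballI impI)
    fix y assume y: "y \<in> S" "y \<noteq> x"
    have xs: "x \<in> set pi" "y \<in> set pi" using x(1) y(1) assms(4) by auto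
    have "rk pi x \<noteq> rk pi y" using rk_inj[OF assms(1) xs] y(2) by metis
    then have "rk pi x < rk pi y" using le y(1) by (simp add: le_neq_implies_less)
    then show "prec pi x y" using xs prec_rk[OF assms(1)] by blast
  qed
  have "pmin pi S = x" unfolding pmin_def
  proof (rule the_equality)
    fix z assume z: "z \<in> S \<and> (\<forall>y\<in>S. y \<noteq> z \<longrightarrow> prec pi z y)"
    show "z = x"
    proof (rule ccontr)
      assume "z \<noteq> x"
      hence "prec pi z x" "prec pi x z" using z P x by auto
      thus False by (simp add: prec_rk[OF assms(1)])
    qed
  qed (use x P in auto)
  thus ?thesis using x le by simp
qed

lemma pmax2: assumes "distinct pi" "a \<in> set pi" "b \<in> set pi"
  shows "pmax2 pi a b = (if rk pi a < rk pi b then b else a)"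
  using assms by (simp add: pmax2_def prec_rk)




lemma sub_rep: "k \<le> length P \<Longrightarrow> sub (line_tree P l) (replicate k True) = line_tree (drop k P) l"
proof (induction P arbitrary: k)
  case (Cons a P) then show ?case by (cases k) auto
qed simp

lemma sub_leaf: "k < length P \<Longrightarrow> sub (line_tree P l) (replicate k True @ [False]) = Lf (P ! k)"
proof (induction P arbitrary: k)
  case (Cons a P) then show ?case by (cases k) auto
qed simp

lemma rep1: "(True # q = replicate k True) \<longleftrightarrow> (\<exists>k'. k = Suc k' \<and> q = replicate k' True)" by (cases k) auto
lemma rep2: "(True # q = replicate k True @ [False]) \<longleftrightarrow> (\<exists>k'. k = Suc k' \<and> q = replicate k' True @ [False])" by (cases k) auto
lemma rep3: "(False # q = replicate k True) \<longleftrightarrow> False" by (cases k) auto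
lemma rep4: "(False # q = replicate k True @ [False]) \<longleftrightarrow> k = 0 \<and> q = []" by (cases k) auto
lemma rep5: "([] = replicate k True) \<longleftrightarrow> k = 0" by (cases k) auto
lemma rep6: "([] = replicate k True @ [False]) \<longleftrightarrow> False" by simp

lemma pos_lt: "p \<in> pos (line_tree P l) \<longleftrightarrow> (\<exists>k\<le>length P. p = replicate k True) \<or> (\<exists>k<length P. p = replicate k True @ [False])"
proof (induction P arbitrary: p)
  case Nil then show ?case by auto
next
  case (Cons a P)
  have L: "p \<in> pos (line_tree (a # P) l) \<longleftrightarrow> p = [] \<or> p = [False] \<or> (\<exists>q. p = True # q \<and> q \<in> pos (line_tree P l))"
    by auto
  show ?case
  proof (cases p)
    case Nil
    then show ?thesis unfolding L using rep5[of 0] by blast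
  next
    case (Cons b q)
    show ?thesis
    proof (cases b)
      case True
      have pq: "p = True # q" using Cons True by simp
      have "(\<exists>k\<le>length (a # P). p = replicate k True) \<longleftrightarrow> (\<exists>k\<le>length P. q = replicate k True)"
        unfolding pq rep1 by auto
      moreover have "(\<exists>k<length (a # P). p = replicate k True @ [False]) \<longleftrightarrow> (\<exists>k<length P. q = replicate k True @ [False])"
        unfolding pq rep2 by auto
      moreover have "p \<in> pos (line_tree (a # P) l) \<longleftrightarrow> q \<in> pos (line_tree P l)" using pq by auto
      ultimately show ?thesis using Cons.IH[of q] by simp
    next
      case False
      have pq: "p = False # q" using Cons False by simp
      have "(\<exists>k\<le>length (a # P). p = replicate k True) \<longleftrightarrow> False"
        unfolding pq rep3 by auto
      moreover have "(\<exists>k<length (a # P). p = replicate k True @ [False]) \<longleftrightarrow> q = []"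
        unfolding pq rep4 by auto
      moreover have "p \<in> pos (line_tree (a # P) l) \<longleftrightarrow> q = []" using pq by auto
      ultimately show ?thesis by blast
    qed
  qed
qed

lemma leaves_lt: "leaves (line_tree P l) = set P \<union> {l}"
  by (induction P) auto




locale setting =
  fixes pi :: "'a list" and P :: "'a list" and l :: 'a
  assumes dpi: "distinct pi" and dP: "distinct P" and lP: "l \<notin> set P"
    and spi: "set pi = set P \<union> {l}"
begin

abbreviation "n \<equiv> length P"
abbreviation "T \<equiv> line_tree P l"
abbreviation "r \<equiv> rk pi"

definition M :: "nat \<Rightarrow> 'a" where "M s = pmin pi (set (drop s P) \<union> {l})"

definition W :: "nat \<Rightarrow> node" where "W s = (if s = 0 then Root else Inner (replicate (s - 1) True))"

lemma M_props: "M s \<in> set (drop s P) \<union> {l} \<and> (\<forall>y\<in>set (drop s P) \<union> {l}. r (M s) \<le> r y)"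
  unfolding M_def by (rule pmin[OF dpi]) (use spi in \<open>auto dest: in_set_dropD\<close>)

lemma M_mem: "M s \<in> set (drop s P) \<union> {l}" using M_props by blast
lemma M_le: "y \<in> set (drop s P) \<union> {l} \<Longrightarrow> r (M s) \<le> r y" using M_props by blast
lemma M_mono: "s \<le> s' \<Longrightarrow> r (M s) \<le> r (M s')"
  using M_le M_mem[of s'] set_drop_subset_set_drop[of s s' P] by blast

lemma in_pi: "x \<in> set P \<Longrightarrow> x \<in> set pi" "l \<in> set pi" using spi by auto
lemma M_pi: "M s \<in> set pi" using M_mem[of s] spi set_drop_subset by fastforce
lemma nth_pi: "k < n \<Longrightarrow> P ! k \<in> set pi" using in_pi nth_mem by blast

lemma r_inj: "x \<in> set pi \<Longrightarrow> y \<in> set pi \<Longrightarrow> r x = r y \<Longrightarrow> x = y"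
  using rk_inj[OF dpi] by blast

lemma drop_nth: "s \<le> k \<Longrightarrow> k < n \<Longrightarrow> P ! k \<in> set (drop s P)"
  using nth_mem[of "k - s" "drop s P"] by simp

lemma in_drop: "y \<in> set (drop s P) \<Longrightarrow> \<exists>k. s \<le> k \<and> k < n \<and> y = P ! k"
  by (auto simp: in_set_conv_nth) (metis add.commute le_add2 less_diff_conv)

lemma nth_not_drop: "k < s \<Longrightarrow> k < n \<Longrightarrow> P ! k \<notin> set (drop s P) \<union> {l}"
  using in_drop lP nth_mem dP nth_eq_iff_index_eq
  by (metis Un_iff leD order_less_le_trans singletonD)

lemma nth_not_drop': "k < n \<Longrightarrow> P ! k \<notin> set (drop (Suc k) P) \<union> {l}"
  by (rule nth_not_drop) auto

lemma leafpos_P: "k < n \<Longrightarrow> leafpos T (P ! k) = replicate k True @ [False]"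
  unfolding leafpos_def
proof (rule the_equality)
  assume "k < n"
  then show "replicate k True @ [False] \<in> pos T \<and> sub T (replicate k True @ [False]) = Lf (P ! k)"
    by (auto simp: pos_lt sub_leaf)
next
  fix p assume k: "k < n" and p: "p \<in> pos T \<and> sub T p = Lf (P ! k)"
  then consider j where "j \<le> n" "p = replicate j True" | j where "j < n" "p = replicate j True @ [False]"
    by (auto simp: pos_lt)
  then show "p = replicate k True @ [False]"
  proof cases
    case 1
    then have "line_tree (drop j P) l = Lf (P ! k)" using p sub_rep by metis
    then show ?thesis using lP k nth_mem by (cases "drop j P") auto
  next
    case 2
    then have "P ! j = P ! k" using p sub_leaf by fastforce
    then show ?thesis using 2 k dP nth_eq_iff_index_eq by metis
  qed
qed

lemma leafpos_l: "leafpos T l = replicate n True"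
  unfolding leafpos_def
proof (rule the_equality)
  show "replicate n True \<in> pos T \<and> sub T (replicate n True) = Lf l"
    by (auto simp: pos_lt sub_rep)
next
  fix p assume p: "p \<in> pos T \<and> sub T p = Lf l"
  then consider j where "j \<le> n" "p = replicate j True" | j where "j < n" "p = replicate j True @ [False]"
    by (auto simp: pos_lt)
  then show "p = replicate n True"
  proof cases
    case 1
    then have "line_tree (drop j P) l = Lf l" using p sub_rep by metis
    then have "drop j P = []" by (cases "drop j P") auto
    then show ?thesis using 1 by simp
  next
    case 2
    then have "P ! j = l" using p sub_leaf by fastforce
    then show ?thesis using 2 lP nth_mem by metis
  qed
qed

lemma internal: "is_internal T v \<longleftrightarrow> v = Root \<or> (\<exists>k<n. v = Inner (replicate k True))"
proof
  assume "is_internal T v"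
  then show "v = Root \<or> (\<exists>k<n. v = Inner (replicate k True))"
    unfolding is_internal_def
  proof (elim disjE exE conjE)
    fix p a b assume v: "v = Inner p" and p: "p \<in> pos T" and s: "sub T p = Nd a b"
    from p consider j where "j \<le> n" "p = replicate j True" | j where "j < n" "p = replicate j True @ [False]"
      by (auto simp: pos_lt)
    then show ?thesis
    proof cases
      case 1
      then have "line_tree (drop j P) l = Nd a b" using s sub_rep by metis
      then have "j < n" using 1 by (cases "j = n") auto
      then show ?thesis using 1 v by auto
    next
      case 2 then show ?thesis using s sub_leaf by fastforce
    qed
  qed simp
next
  assume "v = Root \<or> (\<exists>k<n. v = Inner (replicate k True))"
  then show "is_internal T v" unfolding is_internal_def
  proof (elim disjE exE conjE)
    fix k assume k: "k < n" "v = Inner (replicate k True)"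
    have "sub T (replicate k True) = Nd (Lf (P ! k)) (line_tree (drop (Suc k) P) l)"
      using k sub_rep[of k P l] Cons_nth_drop_Suc[of k P] by (metis less_imp_le line_tree.simps(2))
    moreover have "replicate k True \<in> pos T" using k by (simp add: pos_lt)
    ultimately show "v = Root \<or> (\<exists>p l r. v = Inner p \<and> p \<in> pos T \<and> sub T p = Nd l r)"
      using k by blast
  qed simp
qed

lemma label_root: "label pi T Root = M 0"
  by (simp add: M_def leaves_lt)

lemma label_v: "k < n \<Longrightarrow> label pi T (Inner (replicate k True)) = (if r (P ! k) < r (M (Suc k)) then M (Suc k) else P ! k)"
proof -
  assume k: "k < n"
  have "sub T (replicate k True) = Nd (Lf (P ! k)) (line_tree (drop (Suc k) P) l)"
    using k sub_rep[of k P l] Cons_nth_drop_Suc[of k P] by (metis less_imp_le line_tree.simps(2))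
  then have "label pi T (Inner (replicate k True)) = pmax2 pi (P ! k) (M (Suc k))"
    using pmin[OF dpi, of "{P ! k}"] nth_pi[OF k] by (simp add: M_def leaves_lt)
  also have "\<dots> = (if r (P ! k) < r (M (Suc k)) then M (Suc k) else P ! k)"
    using pmax2[OF dpi nth_pi[OF k] M_pi] .
  finally show ?thesis .
qed

end



context setting begin

lemma rM_Pk: "s \<le> k \<Longrightarrow> k < n \<Longrightarrow> r (M s) \<le> r (P ! k)"
  using M_le drop_nth by blast

lemma wnode_M:
  assumes s: "s \<le> n" and c: "s = 0 \<or> prec pi (P ! (s - 1)) (M s)"
  shows "wnode pi T (M s) = W s"
  unfolding wnode_def
proof (rule the_equality)
  show "is_internal T (W s) \<and> label pi T (W s) = M s"
  proof (cases "s = 0")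
    case True
    then have "W s = Root" by (simp add: W_def)
    then show ?thesis unfolding True using label_root internal[of Root] by simp
  next
    case False
    then have pr: "r (P ! (s - 1)) < r (M s)" using c prec_rk[OF dpi] by blast
    have Ws: "W s = Inner (replicate (s - 1) True)" using False by (simp add: W_def)
    have sl: "s - 1 < n" using False s by linarith
    have "label pi T (W s) = M s" unfolding Ws label_v[OF sl] using pr False by simp
    moreover have "is_internal T (W s)" unfolding Ws internal using sl by blast
    ultimately show ?thesis by blast
  qed
next
  fix v assume v: "is_internal T v \<and> label pi T v = M s"
  have lv: "label pi T v = M s" using v by blast
  from v consider "v = Root" | k where "k < n" "v = Inner (replicate k True)"
    unfolding internal by blast
  then show "v = W s"
  proof cases
    case 1
    show ?thesis
    proof (cases "s = 0")
      case True then show ?thesis using 1 by (simp add: W_def)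
    next
      case False
      then have pr: "r (P ! (s - 1)) < r (M s)" using c prec_rk[OF dpi] by blast
      have sl: "s - 1 < n" using False s by linarith
      have a: "r (M 0) \<le> r (P ! (s - 1))" using rM_Pk[OF _ sl] by simp
      have "M 0 = M s" using lv label_root 1 by simp
      then have "r (M 0) = r (M s)" by simp
      then show ?thesis using pr a by linarith
    qed
  next
    case 2
    note kn = 2(1)
    have lab: "(if r (P ! k) < r (M (Suc k)) then M (Suc k) else P ! k) = M s"
      using lv label_v[OF kn] 2(2) by simp
    consider "s \<le> k" | "Suc k < s" | "Suc k = s" by linarith
    then show ?thesis
    proof cases
      case 1
      have a: "r (M s) \<le> r (P ! k)" using rM_Pk[OF 1 kn] .
      have b: "r (M s) \<le> r (M (Suc k))" using M_mono 1 by simp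
      show ?thesis
      proof (cases "r (P ! k) < r (M (Suc k))")
        case True
        then have "r (M (Suc k)) = r (M s)" using lab by simp
        then show ?thesis using True a by linarith
      next
        case False
        then have e: "P ! k = M s" using lab by simp
        then have "r (M s) = r (P ! k)" by simp
        then have "r (M (Suc k)) = r (P ! k)" using False b by linarith
        then have "M (Suc k) = P ! k" by (rule r_inj[OF M_pi nth_pi[OF kn]])
        then show ?thesis using M_mem[of "Suc k"] nth_not_drop'[OF kn] by simp
      qed
    next
      case 2
      have sp: "s \<noteq> 0" using 2 by simp
      have pr: "r (P ! (s - 1)) < r (M s)" using c sp prec_rk[OF dpi] by blast
      have sl: "s - 1 < n" using 2 s by linarith
      have a: "r (M (Suc k)) \<le> r (P ! (s - 1))" using rM_Pk[OF _ sl, of "Suc k"] 2 by simp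
      have ne: "P ! k \<noteq> M s" using M_mem[of s] nth_not_drop[of k s] 2 kn by auto
      show ?thesis
      proof (cases "r (P ! k) < r (M (Suc k))")
        case True
        then have "r (M (Suc k)) = r (M s)" using lab by simp
        then show ?thesis using pr a True by linarith
      next
        case False
        then have "P ! k = M s" using lab by simp
        then show ?thesis using ne by blast
      qed
    next
      case 3 then show ?thesis using 2(2) by (simp add: W_def)
    qed
  qed
qed

lemma lts_W:
  assumes "wnode pi T f = W s"
  shows "lts pi T f = map (\<lambda>k. label pi T (Inner (take k (leafpos T f)))) [s..<length (leafpos T f)]"
proof (cases "s = 0")
  case True
  then have "wnode pi T f = Root" using assms by (simp add: W_def)
  then show ?thesis using True by (simp add: lts_def Let_def)
next
  case False
  then have "wnode pi T f = Inner (replicate (s - 1) True)" using assms by (simp add: W_def)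
  then show ?thesis using False by (simp add: lts_def Let_def)
qed

lemma lts_P:
  assumes s: "s \<le> n" and c: "s = 0 \<or> prec pi (P ! (s - 1)) (M s)"
    and e: "M s = P ! j" and j: "j < n"
  shows "s \<le> j \<and> lts pi T (M s) = map (nth P) [s..<j] @ [M (Suc j)]"
proof -
  have sj: "s \<le> j"
  proof (rule ccontr)
    assume "\<not> s \<le> j"
    then have "P ! j \<notin> set (drop s P) \<union> {l}" using nth_not_drop[of j s] j by simp
    then show False using M_mem[of s] e by simp
  qed
  have "lts pi T (M s) = map (\<lambda>k. label pi T (Inner (take k (leafpos T (M s))))) [s..<length (leafpos T (M s))]"
    using lts_W[OF wnode_M[OF s c]] .
  also have "leafpos T (M s) = replicate j True @ [False]" unfolding e using leafpos_P[OF j] .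
  finally have L: "lts pi T (M s) = map (\<lambda>k. label pi T (Inner (take k (replicate j True @ [False])))) [s..<Suc j]"
    by simp
  have sp: "[s..<Suc j] = [s..<j] @ [j]" using sj by simp
  have m1: "map (\<lambda>k. label pi T (Inner (take k (replicate j True @ [False])))) [s..<j] = map (nth P) [s..<j]"
  proof (rule map_cong)
    fix k assume "k \<in> set [s..<j]"
    then have k: "s \<le> k" "k < j" by auto
    have kn: "k < n" using k j by linarith
    have tk: "take k (replicate j True @ [False]) = replicate k True" using k by simp
    have "r (M (Suc k)) \<le> r (P ! j)" using rM_Pk[of "Suc k" j] k j by linarith
    also have "\<dots> \<le> r (P ! k)" using rM_Pk[OF k(1) kn] e by simp
    finally show "label pi T (Inner (take k (replicate j True @ [False]))) = P ! k"
      unfolding tk label_v[OF kn] by simp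
  qed simp
  have m2: "label pi T (Inner (take j (replicate j True @ [False]))) = M (Suc j)"
  proof -
    have "r (P ! j) \<le> r (M (Suc j))" using e M_mono[of s "Suc j"] sj by simp
    moreover have "P ! j \<noteq> M (Suc j)" using M_mem[of "Suc j"] nth_not_drop'[OF j] by auto
    ultimately have "r (P ! j) < r (M (Suc j))"
      using r_inj[OF nth_pi[OF j] M_pi] le_neq_implies_less by blast
    then show ?thesis using label_v[OF j] by simp
  qed
  show ?thesis using L sp m1 m2 sj by simp
qed

lemma lts_l:
  assumes s: "s \<le> n" and c: "s = 0 \<or> prec pi (P ! (s - 1)) (M s)" and e: "M s = l"
  shows "lts pi T (M s) = map (nth P) [s..<n]"
proof -
  have "lts pi T (M s) = map (\<lambda>k. label pi T (Inner (take k (leafpos T (M s))))) [s..<length (leafpos T (M s))]"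
    using lts_W[OF wnode_M[OF s c]] .
  also have "leafpos T (M s) = replicate n True" unfolding e using leafpos_l .
  finally have L: "lts pi T (M s) = map (\<lambda>k. label pi T (Inner (take k (replicate n True)))) [s..<n]"
    by simp
  also have "\<dots> = map (nth P) [s..<n]"
  proof (rule map_cong)
    fix k assume "k \<in> set [s..<n]"
    then have k: "s \<le> k" "k < n" by auto
    have "r (M (Suc k)) \<le> r l" using M_le by simp
    also have "\<dots> \<le> r (P ! k)" using rM_Pk[OF k] e by simp
    finally have "r (M (Suc k)) \<le> r (P ! k)" .
    moreover have tk: "take k (replicate n True) = replicate k True" using k by simp
    ultimately show "label pi T (Inner (take k (replicate n True))) = P ! k"
      unfolding tk label_v[OF k(2)] by simp
  qed simp
  finally show ?thesis .
qed

end



context setting begin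

definition mm :: 'a where "mm = pmin pi {last P, l}"

definition Q :: "'a list \<Rightarrow> nat \<Rightarrow> bool" where
  "Q bs j \<longleftrightarrow> bs ! j \<noteq> mm \<and> (\<exists>x. 1 \<le> x \<and> x \<le> n \<and> bs ! j = P ! (x - 1) \<and> prec pi (bs ! j) mm \<and> bs ! (j + 1) = M x)"

lemma beta_seq_iff: "beta_seq pi P l bs \<longleftrightarrow> bs \<noteq> [] \<and> hd bs = hd pi \<and> last bs = mm \<and> (\<forall>j<length bs - 1. Q bs j)"
  unfolding beta_seq_def Let_def Q_def M_def mm_def by simp

lemma mm_props: assumes "P \<noteq> []"
  shows "mm \<in> {last P, l} \<and> r mm \<le> r (last P) \<and> r mm \<le> r l"
proof -
  have "last P \<in> set pi" using assms in_pi by simp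
  then have "pmin pi {last P, l} \<in> {last P, l} \<and> (\<forall>y\<in>{last P, l}. r (pmin pi {last P, l}) \<le> r y)"
    using pmin[OF dpi, of "{last P, l}"] in_pi by simp
  then show ?thesis unfolding mm_def by simp
qed

lemma mm_pi: "P \<noteq> [] \<Longrightarrow> mm \<in> set pi" using mm_props in_pi by auto

lemma last_nth: "P \<noteq> [] \<Longrightarrow> last P = P ! (n - 1)" by (simp add: last_conv_nth)

lemma M0: "M 0 = hd pi"
proof -
  have ne: "pi \<noteq> []" using in_pi(2) by auto
  have "hd pi \<in> set pi" using ne by simp
  then have "r (M 0) \<le> r (hd pi)" using M_le[of "hd pi" 0] spi by simp
  moreover have "r (hd pi) = 0" using rk[OF dpi, of "hd pi"] ne
    by (metis \<open>hd pi \<in> set pi\<close> dpi hd_conv_nth length_greater_0_conv nth_eq_iff_index_eq)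
  ultimately show ?thesis using r_inj[OF M_pi \<open>hd pi \<in> set pi\<close>] by simp
qed

lemma M_eq_nth: "M s = P ! j \<Longrightarrow> j < n \<Longrightarrow> s \<le> j"
proof (rule ccontr)
  assume e: "M s = P ! j" and j: "j < n" and "\<not> s \<le> j"
  then have "P ! j \<notin> set (drop s P) \<union> {l}" using nth_not_drop[of j s] by simp
  then show False using M_mem[of s] e by simp
qed

lemma exists_from:
  assumes ne: "P \<noteq> []"
  shows "s \<le> n \<Longrightarrow> r (M s) \<le> r mm \<Longrightarrow> \<exists>bs. bs \<noteq> [] \<and> hd bs = M s \<and> last bs = mm \<and> (\<forall>j<length bs - 1. Q bs j)"
proof (induction "n - s" arbitrary: s rule: less_induct)
  case less
  show ?case
  proof (cases "M s = mm")
    case True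
    then show ?thesis by (intro exI[of _ "[mm]"]) simp
  next
    case False
    have lt: "r (M s) < r mm" using less.prems(2) False r_inj[OF M_pi[of s] mm_pi[OF ne]] le_neq_implies_less by blast
    have Ml: "M s \<noteq> l"
    proof
      assume "M s = l" then show False using lt mm_props[OF ne] by simp
    qed
    then have "M s \<in> set (drop s P)" using M_mem[of s] by simp
    then obtain c where c: "s \<le> c" "c < n" "M s = P ! c" using in_drop by blast
    have rc: "r (M (Suc c)) \<le> r mm"
    proof (cases "Suc c < n")
      case True
      have "last P \<in> set (drop (Suc c) P)" using drop_nth[of "Suc c" "n - 1"] True last_nth[OF ne] by simp
      then have "r (M (Suc c)) \<le> r (last P)" using M_le by simp
      moreover have "r (M (Suc c)) \<le> r l" using M_le by simp
      ultimately show ?thesis using mm_props[OF ne] by auto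
    next
      case False
      then have "c = n - 1" using c(2) by linarith
      then have "P ! c = last P" using last_nth[OF ne] by simp
      then have "r (last P) < r mm" using lt c(3) by simp
      then show ?thesis using mm_props[OF ne] by simp
    qed
    obtain bs' where bs': "bs' \<noteq> []" "hd bs' = M (Suc c)" "last bs' = mm" "\<forall>j<length bs' - 1. Q bs' j"
    proof -
      have d: "n - Suc c < n - s" using c(1,2) by linarith
      have "Suc c \<le> n" using c(2) by simp
      then show ?thesis using less.hyps[OF d] rc that by blast
    qed
    have "\<forall>j<length (M s # bs') - 1. Q (M s # bs') j"
    proof (intro allI impI)
      fix j assume j: "j < length (M s # bs') - 1"
      show "Q (M s # bs') j"
      proof (cases j)
        case 0
        have "prec pi (M s) mm" using lt M_pi mm_pi[OF ne] prec_rk[OF dpi] by blast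
        moreover have "(M s # bs') ! 1 = M (Suc c)" using bs' by (cases bs') auto
        ultimately show ?thesis unfolding Q_def using 0 False c
          by (intro conjI exI[of _ "Suc c"]) auto
      next
        case (Suc j')
        then have "Q bs' j'" using bs'(4) j by simp
        then show ?thesis using Suc unfolding Q_def by simp
      qed
    qed
    then show ?thesis using bs' by (intro exI[of _ "M s # bs'"]) simp
  qed
qed

lemma exists_beta: assumes ne: "P \<noteq> []" shows "\<exists>bs. beta_seq pi P l bs"
proof -
  have "mm \<in> set (drop 0 P) \<union> {l}" using mm_props[OF ne] ne by auto
  then have "r (M 0) \<le> r mm" by (rule M_le)
  then obtain bs where bs: "bs \<noteq> []" "hd bs = M 0" "last bs = mm" "\<forall>j<length bs - 1. Q bs j"
    using exists_from[OF ne, of 0] by blast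
  then have "beta_seq pi P l bs" unfolding beta_seq_iff M0 by blast
  then show ?thesis by blast
qed

end



lemma upt_split: "i \<le> j \<Longrightarrow> j \<le> k \<Longrightarrow> [i..<k] = [i..<j] @ [j..<k]"
  using upt_add_eq_append[of i j "k - j"] by simp

context setting begin

lemma decomp:
  assumes ne: "P \<noteq> []" and b: "beta_seq pi P l bs"
  shows "(\<forall>j<length bs. lts pi T (bs ! j) \<noteq> []) \<and>
    P = concat (map (\<lambda>j. butlast (lts pi T (bs ! j)) @ [bs ! j]) [0..<length bs - 1]) @
      (if bs ! (length bs - 1) = l then lts pi T (bs ! (length bs - 1))
       else butlast (lts pi T (bs ! (length bs - 1))) @ [bs ! (length bs - 1)])"
proof -
  define w where "w = length bs"
  have bsne: "bs \<noteq> []" and hdb: "hd bs = hd pi" and lastb: "last bs = mm" and QQ: "\<forall>j<w - 1. Q bs j"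
    using b unfolding beta_seq_iff w_def by auto
  have w1: "w \<ge> 1" using bsne w_def by (cases bs) auto
  have "\<forall>j. \<exists>x. j < w - 1 \<longrightarrow> (1 \<le> x \<and> x \<le> n \<and> bs ! j = P ! (x - 1) \<and> prec pi (bs ! j) mm \<and> bs ! (j + 1) = M x)"
    using QQ unfolding Q_def by blast
  then obtain X where X: "\<And>j. j < w - 1 \<Longrightarrow> 1 \<le> X j \<and> X j \<le> n \<and> bs ! j = P ! (X j - 1) \<and> prec pi (bs ! j) mm \<and> bs ! (j + 1) = M (X j)"
    using choice[of "\<lambda>j x. j < w - 1 \<longrightarrow> (1 \<le> x \<and> x \<le> n \<and> bs ! j = P ! (x - 1) \<and> prec pi (bs ! j) mm \<and> bs ! (j + 1) = M x)"] by blast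
  define st where "st j = (if j = 0 then 0 else X (j - 1))" for j
  have stS: "st (Suc j) = X j" for j by (simp add: st_def)
  have inv: "j < w \<Longrightarrow> st j \<le> n \<and> bs ! j = M (st j) \<and> (st j = 0 \<or> prec pi (P ! (st j - 1)) (M (st j)))" for j
  proof (induction j)
    case 0
    have "bs ! 0 = M 0" using hdb M0 hd_conv_nth[OF bsne] by simp
    then show ?case by (simp add: st_def)
  next
    case (Suc j)
    then have j: "j < w - 1" by simp
    note Xj = X[OF j]
    have IH: "st j \<le> n \<and> bs ! j = M (st j)" using Suc j by simp
    have xn: "X j - 1 < n" using Xj by linarith
    have e: "M (st j) = P ! (X j - 1)" using IH Xj by simp
    have le: "st j \<le> X j - 1" using M_eq_nth[OF e xn] .
    have sx: "Suc (X j - 1) = X j" using Xj by linarith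
    have a: "r (M (st j)) \<le> r (M (X j))" using M_mono le by simp
    have "P ! (X j - 1) \<notin> set (drop (X j) P) \<union> {l}" using nth_not_drop'[OF xn] sx by simp
    then have nq: "P ! (X j - 1) \<noteq> M (X j)" using M_mem[of "X j"] by auto
    have "r (P ! (X j - 1)) < r (M (X j))"
      using a e nq r_inj[OF nth_pi[OF xn] M_pi] le_neq_implies_less by metis
    then have "prec pi (P ! (X j - 1)) (M (X j))" using nth_pi[OF xn] M_pi prec_rk[OF dpi] by blast
    then show ?case using Xj by (simp add: stS)
  qed
  have piece: "lts pi T (bs ! j) \<noteq> [] \<and> butlast (lts pi T (bs ! j)) @ [bs ! j] = map (nth P) [st j..<st (Suc j)]"
    if j: "j < w - 1" for j
  proof -
    note Xj = X[OF j]
    have I: "st j \<le> n" "bs ! j = M (st j)" "st j = 0 \<or> prec pi (P ! (st j - 1)) (M (st j))"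
      using inv[of j] j by auto
    have xn: "X j - 1 < n" using Xj by linarith
    have e: "M (st j) = P ! (X j - 1)" using I Xj by simp
    from lts_P[OF I(1) I(3) e xn]
    have L: "st j \<le> X j - 1" "lts pi T (M (st j)) = map (nth P) [st j..<X j - 1] @ [M (Suc (X j - 1))]" by auto
    have "map (nth P) [st j..<X j - 1] @ [P ! (X j - 1)] = map (nth P) [st j..<Suc (X j - 1)]"
      using L(1) by simp
    moreover have "Suc (X j - 1) = X j" using Xj by linarith
    ultimately show ?thesis using L I(2) e by (simp add: stS)
  qed
  have mono: "st j \<le> st (Suc j)" if "j < w - 1" for j
  proof -
    have "st j \<le> X j - 1" using that inv[of j] X[OF that] M_eq_nth[of "st j" "X j - 1"] by fastforce
    then show ?thesis by (simp add: stS)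
  qed
  have conc: "k \<le> w - 1 \<Longrightarrow> concat (map (\<lambda>j. map (nth P) [st j..<st (Suc j)]) [0..<k]) = map (nth P) [0..<st k]" for k
  proof (induction k)
    case 0 then show ?case by (simp add: st_def)
  next
    case (Suc k)
    then have "concat (map (\<lambda>j. map (nth P) [st j..<st (Suc j)]) [0..<Suc k])
       = map (nth P) [0..<st k] @ map (nth P) [st k..<st (Suc k)]" by simp
    also have "\<dots> = map (nth P) [0..<st (Suc k)]"
      using upt_split[of 0 "st k" "st (Suc k)"] mono[of k] Suc.prems by simp
    finally show ?case .
  qed
  define s where "s = st (w - 1)"
  have Is: "s \<le> n" "bs ! (w - 1) = M s" "s = 0 \<or> prec pi (P ! (s - 1)) (M s)"
    using inv[of "w - 1"] w1 s_def by auto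
  have bm: "bs ! (w - 1) = mm" using lastb last_conv_nth[OF bsne] w_def by simp
  have lastp: "lts pi T (bs ! (w - 1)) \<noteq> [] \<and>
      (if bs ! (w - 1) = l then lts pi T (bs ! (w - 1))
       else butlast (lts pi T (bs ! (w - 1))) @ [bs ! (w - 1)]) = map (nth P) [s..<n]"
  proof (cases "mm = l")
    case True
    have L: "lts pi T (M s) = map (nth P) [s..<n]" using lts_l[OF Is(1) Is(3)] Is(2) bm True by simp
    have "s < n"
    proof (rule ccontr)
      assume "\<not> s < n"
      then have sn: "s = n" using Is(1) by simp
      then have w2: "w - 1 \<noteq> 0" using ne s_def st_def by (cases "w - 1 = 0") auto
      define j0 where "j0 = w - 2"
      have j0: "j0 < w - 1" "Suc j0 = w - 1" using w2 j0_def by auto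
      have "X j0 = n" using sn s_def j0 stS by metis
      then have "bs ! j0 = last P" "prec pi (bs ! j0) mm" using X[OF j0(1)] last_nth[OF ne] by auto
      then show False using mm_props[OF ne] prec_rk[OF dpi] by simp
    qed
    then show ?thesis using L Is(2) bm True ne by simp
  next
    case False
    then have ml: "mm = P ! (n - 1)" using mm_props[OF ne] last_nth[OF ne] by auto
    have nn: "n - 1 < n" using ne by simp
    from lts_P[OF Is(1) Is(3) _ nn] Is(2) bm ml
    have L: "s \<le> n - 1" "lts pi T (M s) = map (nth P) [s..<n - 1] @ [M (Suc (n - 1))]" by auto
    have sn: "Suc (n - 1) = n" using ne by simp
    have "[s..<n] = [s..<n - 1] @ [n - 1]" using upt_Suc_append[OF L(1)] unfolding sn .
    then have "map (nth P) [s..<n - 1] @ [P ! (n - 1)] = map (nth P) [s..<n]" by simp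
    then show ?thesis using L Is(2) bm ml False by simp
  qed
  have "concat (map (\<lambda>j. butlast (lts pi T (bs ! j)) @ [bs ! j]) [0..<w - 1])
      = concat (map (\<lambda>j. map (nth P) [st j..<st (Suc j)]) [0..<w - 1])"
    using piece by (intro arg_cong[where f=concat] map_cong) auto
  also have "\<dots> = map (nth P) [0..<s]" using conc[of "w - 1"] s_def by simp
  finally have C: "concat (map (\<lambda>j. butlast (lts pi T (bs ! j)) @ [bs ! j]) [0..<w - 1]) = map (nth P) [0..<s]" .
  have "P = map (nth P) [0..<n]" by (simp add: map_nth)
  also have "\<dots> = map (nth P) [0..<s] @ map (nth P) [s..<n]" using upt_split[of 0 s n] Is(1) by simp
  finally have PP: "P = map (nth P) [0..<s] @ map (nth P) [s..<n]" .
  have nonempty: "\<forall>j<w. lts pi T (bs ! j) \<noteq> []"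
  proof (intro allI impI)
    fix j assume "j < w"
    then consider "j < w - 1" | "j = w - 1" by linarith
    then show "lts pi T (bs ! j) \<noteq> []" using piece lastp by cases auto
  qed
  show ?thesis using nonempty C PP lastp unfolding w_def[symmetric] by simp
qed

end

theorem proposition1:
  fixes Sigma :: "'a set" and l :: 'a and P :: "'a list" and pi :: "'a list"
  assumes "finite Sigma"
    and "l \<notin> Sigma"
    and "distinct P" and "set P = Sigma"
    and "distinct pi" and "set pi = Sigma \<union> {l}"
    and "hd pi \<noteq> l"
  shows "(\<exists>bs. beta_seq pi P l bs) \<and>
    (\<forall>bs. beta_seq pi P l bs \<longrightarrow>
      (let w = length bs; S = (\<lambda>j. lts pi (line_tree P l) (bs ! j)) in
        (\<forall>j < w. S j \<noteq> []) \<and>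
        P = concat (map (\<lambda>j. butlast (S j) @ [bs ! j]) [0..<w - 1]) @
            (if bs ! (w - 1) = l then S (w - 1) else butlast (S (w - 1)) @ [bs ! (w - 1)])))"
proof -
  interpret setting pi P l using assms by unfold_locales auto
  have ne: "P \<noteq> []"
  proof
    assume "P = []"
    then have "set pi = {l}" using assms by simp
    then have pne: "pi \<noteq> []" by auto
    have "hd pi \<in> set pi" using hd_in_set[OF pne] .
    then show False using assms(7) \<open>set pi = {l}\<close> by simp
  qed
  show ?thesis
  proof (intro conjI allI impI)
    show "\<exists>bs. beta_seq pi P l bs" by (rule exists_beta[OF ne])
  next
    fix bs assume b: "beta_seq pi P l bs"
    note D = decomp[OF ne b]
    show "let w = length bs; S = (\<lambda>j. lts pi (line_tree P l) (bs ! j)) in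
        (\<forall>j < w. S j \<noteq> []) \<and>
        P = concat (map (\<lambda>j. butlast (S j) @ [bs ! j]) [0..<w - 1]) @
            (if bs ! (w - 1) = l then S (w - 1) else butlast (S (w - 1)) @ [bs ! (w - 1)])"
      unfolding Let_def by (rule D)
  qed
qed

end
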